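(* For any CC-MAR instance $(G,\mathcal{T})$, there exists a strategy profile of minimum total cost in which all agents having identical terminal pairs (i.e., $(s_i,t_i)=(s_j,t_j)$) use identical paths.
   Context: A mixed graph $G=(V,E,A)$ has undirected edges $E\subseteq\binom{V}{2}$ with positive integer weights $w_e$ and arcs $A\subseteq V\times V$. A path is a sequence of pairwise distinct vertices in which consecutive vertices are joined by an edge or by an arc in the forward direction. A CC-MAR instance is $(G,\mathcal{T})$ with $\mathcal{T}$ a multiset of $k$ pairs $(s_i,t_i)$ (the same pair may occur several times), each connected by some path. A strategy profile $\mathcal{P}=\{P_1,\dots,P_k\}$ consists of $s_i$-$t_i$ paths. For $\{u,v\}\in E$, $x_{uv}$ is the number of paths traversing it from $u$ to $v$. The total cost is $\mathrm{cost}(\mathcal{P})=\sum_{\{u,v\}\in E}w_{uv}x_{uv}x_{vu}$. *)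

theory Defs
  imports Main
begin

definition mixed_graph :: "'v set \<Rightarrow> 'v set set \<Rightarrow> ('v set \<Rightarrow> nat) \<Rightarrow> ('v \<times> 'v) set \<Rightarrow> bool" where
  "mixed_graph V E w A \<longleftrightarrow> finite V
     \<and> (\<forall>e\<in>E. \<exists>u v. u \<in> V \<and> v \<in> V \<and> u \<noteq> v \<and> e = {u, v})
     \<and> (\<forall>e\<in>E. w e > 0)
     \<and> A \<subseteq> V \<times> V"

definition is_path :: "'v set \<Rightarrow> 'v set set \<Rightarrow> ('v \<times> 'v) set \<Rightarrow> 'v list \<Rightarrow> bool" where
  "is_path V E A p \<longleftrightarrow> p \<noteq> [] \<and> distinct p \<and> set p \<subseteq> V
     \<and> (\<forall>j. Suc j < length p \<longrightarrow> ({p ! j, p ! Suc j} \<in> E \<or> (p ! j, p ! Suc j) \<in> A))"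

definition is_st_path :: "'v set \<Rightarrow> 'v set set \<Rightarrow> ('v \<times> 'v) set \<Rightarrow> 'v \<Rightarrow> 'v \<Rightarrow> 'v list \<Rightarrow> bool" where
  "is_st_path V E A s t p \<longleftrightarrow> is_path V E A p \<and> hd p = s \<and> last p = t"

definition cc_mar_instance :: "'v set \<Rightarrow> 'v set set \<Rightarrow> ('v set \<Rightarrow> nat) \<Rightarrow> ('v \<times> 'v) set \<Rightarrow> ('v \<times> 'v) list \<Rightarrow> bool" where
  "cc_mar_instance V E w A T \<longleftrightarrow> mixed_graph V E w A
     \<and> (\<forall>i < length T. \<exists>p. is_st_path V E A (fst (T ! i)) (snd (T ! i)) p)"

definition strategy_profile :: "'v set \<Rightarrow> 'v set set \<Rightarrow> ('v \<times> 'v) set \<Rightarrow> ('v \<times> 'v) list \<Rightarrow> 'v list list \<Rightarrow> bool" where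
  "strategy_profile V E A T P \<longleftrightarrow> length P = length T
     \<and> (\<forall>i < length T. is_st_path V E A (fst (T ! i)) (snd (T ! i)) (P ! i))"

definition traverses :: "'v list \<Rightarrow> 'v \<Rightarrow> 'v \<Rightarrow> bool" where
  "traverses p u v \<longleftrightarrow> (\<exists>j. Suc j < length p \<and> p ! j = u \<and> p ! Suc j = v)"

definition flow :: "'v list list \<Rightarrow> 'v \<Rightarrow> 'v \<Rightarrow> nat" where
  "flow P u v = card {i. i < length P \<and> traverses (P ! i) u v}"

text \<open>Total cost: sum over edges {u,v} of w_uv * x_uv * x_vu (the product is symmetric in u, v,
so any choice of endpoints representation gives the same value).\<close>

definition total_cost :: "'v set set \<Rightarrow> ('v set \<Rightarrow> nat) \<Rightarrow> 'v list list \<Rightarrow> nat" where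
  "total_cost E w P = (\<Sum>e\<in>E. (let uv = (SOME uv. e = {fst uv, snd uv})
       in w e * flow P (fst uv) (snd uv) * flow P (snd uv) (fst uv)))"

end

theory Submission
  imports Defs
begin

definition DD :: "'v set set \<Rightarrow> ('v set \<Rightarrow> nat) \<Rightarrow> 'v list \<Rightarrow> 'v list \<Rightarrow> nat" where
  "DD E w p q = (\<Sum>e\<in>E. (let uv = (SOME uv. e = {fst uv, snd uv})
       in w e * (if traverses p (fst uv) (snd uv) then 1 else 0) * (if traverses q (snd uv) (fst uv) then 1 else 0)))"

lemma card_as_sum: "card {i. i < (n::nat) \<and> Q i} = (\<Sum>i<n. if Q i then 1 else (0::nat))"
proof (induction n)
  case 0
  then show ?case by simp
next
  case (Suc n)
  have e: "{i. i < Suc n \<and> Q i} = {i. i < n \<and> Q i} \<union> (if Q n then {n} else {})" using less_Suc_eq by auto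
  show ?case using Suc by (simp add: e)
qed

lemma flow_sum: "flow P u v = (\<Sum>i<length P. if traverses (P!i) u v then 1 else 0)"
  unfolding flow_def by (rule card_as_sum)

lemma prod3: "(c::nat) * (\<Sum>i<n. a i) * (\<Sum>j<n. b j) = (\<Sum>i<n. \<Sum>j<n. c * a i * b j)"
proof -
  have "c * sum a {..<n} * sum b {..<n} = (\<Sum>i<n. c * a i) * sum b {..<n}" by (simp add: sum_distrib_left)
  also have "\<dots> = (\<Sum>i<n. \<Sum>j<n. c * a i * b j)" by (rule sum_product)
  finally show ?thesis .
qed

lemma cost_decomp: "total_cost E w P = (\<Sum>i<length P. \<Sum>j<length P. DD E w (P!i) (P!j))"
proof -
  have "total_cost E w P = (\<Sum>e\<in>E. \<Sum>i<length P. \<Sum>j<length P. (let uv = (SOME uv. e = {fst uv, snd uv})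
       in w e * (if traverses (P!i) (fst uv) (snd uv) then 1 else 0) * (if traverses (P!j) (snd uv) (fst uv) then 1 else 0)))"
    unfolding total_cost_def flow_sum Let_def prod3 ..
  also have "\<dots> = (\<Sum>i<length P. \<Sum>e\<in>E. \<Sum>j<length P. (let uv = (SOME uv. e = {fst uv, snd uv})
       in w e * (if traverses (P!i) (fst uv) (snd uv) then 1 else 0) * (if traverses (P!j) (snd uv) (fst uv) then 1 else 0)))"
    by (rule sum.swap)
  also have "\<dots> = (\<Sum>i<length P. \<Sum>j<length P. DD E w (P!i) (P!j))"
    unfolding DD_def by (rule sum.cong[OF refl], rule sum.swap)
  finally show ?thesis .
qed

lemma trav_both: assumes "distinct p" "traverses p u v" "traverses p v u" shows False
proof -
  obtain j where j: "Suc j < length p" "p!j = u" "p!Suc j = v" using assms(2) unfolding traverses_def by blast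
  obtain k where k: "Suc k < length p" "p!k = v" "p!Suc k = u" using assms(3) unfolding traverses_def by blast
  have "j = Suc k" using j k assms(1) nth_eq_iff_index_eq by (metis Suc_lessD)
  moreover have "Suc j = k" using j k assms(1) nth_eq_iff_index_eq by (metis Suc_lessD)
  ultimately show False by simp
qed

lemma DD_self: "distinct p \<Longrightarrow> DD E w p p = 0"
  unfolding DD_def Let_def by (rule sum.neutral) (auto dest: trav_both)

lemma split4:
  fixes F :: "nat \<Rightarrow> nat \<Rightarrow> nat"
  assumes "finite I" "G \<subseteq> I"
  shows "(\<Sum>a\<in>I. \<Sum>b\<in>I. F a b) = (\<Sum>a\<in>G. \<Sum>b\<in>G. F a b) + (\<Sum>a\<in>G. \<Sum>b\<in>I-G. F a b)
     + (\<Sum>a\<in>I-G. \<Sum>b\<in>G. F a b) + (\<Sum>a\<in>I-G. \<Sum>b\<in>I-G. F a b)"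
proof -
  have fG: "finite G" using assms finite_subset by blast
  have fH: "finite (I-G)" using assms by simp
  have I: "I = G \<union> (I - G)" using assms by blast
  have s: "\<And>h. sum h I = sum h G + sum h (I - G)"
    by (subst I, rule sum.union_disjoint[OF fG fH]) auto
  show ?thesis by (simp add: s sum.distrib)
qed

lemma regroup:
  fixes D :: "'p \<Rightarrow> 'p \<Rightarrow> nat" and f :: "nat \<Rightarrow> 'p"
  assumes fin: "finite I" and GI: "G \<subseteq> I" and i0: "i0 \<in> G" and D0: "D (f i0) (f i0) = 0"
   and minim: "\<forall>i\<in>G. (\<Sum>k\<in>I-G. D (f i0) (f k) + D (f k) (f i0)) \<le> (\<Sum>k\<in>I-G. D (f i) (f k) + D (f k) (f i))"
  shows "(\<Sum>a\<in>I. \<Sum>b\<in>I. D (if a\<in>G then f i0 else f a) (if b\<in>G then f i0 else f b)) \<le> (\<Sum>a\<in>I. \<Sum>b\<in>I. D (f a) (f b))"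
proof -
  let ?p = "f i0"
  let ?H = "I - G"
  let ?g = "\<lambda>q. (\<Sum>k\<in>?H. D q (f k) + D (f k) q)"
  have L: "(\<Sum>a\<in>I. \<Sum>b\<in>I. D (if a\<in>G then f i0 else f a) (if b\<in>G then f i0 else f b))
     = 0 + (\<Sum>a\<in>G. ?g ?p) + (\<Sum>a\<in>?H. \<Sum>b\<in>?H. D (f a) (f b))"
  proof -
    have "(\<Sum>a\<in>I. \<Sum>b\<in>I. D (if a\<in>G then f i0 else f a) (if b\<in>G then f i0 else f b))
      = (\<Sum>a\<in>G. \<Sum>b\<in>G. D ?p ?p) + (\<Sum>a\<in>G. \<Sum>b\<in>?H. D ?p (f b))
     + (\<Sum>a\<in>?H. \<Sum>b\<in>G. D (f a) ?p) + (\<Sum>a\<in>?H. \<Sum>b\<in>?H. D (f a) (f b))"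
      by (subst split4[OF fin GI]) simp
    also have "(\<Sum>a\<in>?H. \<Sum>b\<in>G. D (f a) ?p) = (\<Sum>b\<in>G. \<Sum>a\<in>?H. D (f a) ?p)" by (rule sum.swap)
    finally show ?thesis using D0 by (simp add: sum.distrib add_mult_distrib2)
  qed
  have R: "(\<Sum>a\<in>I. \<Sum>b\<in>I. D (f a) (f b))
     = (\<Sum>a\<in>G. \<Sum>b\<in>G. D (f a) (f b)) + (\<Sum>a\<in>G. ?g (f a)) + (\<Sum>a\<in>?H. \<Sum>b\<in>?H. D (f a) (f b))"
  proof -
    have "(\<Sum>a\<in>I. \<Sum>b\<in>I. D (f a) (f b))
      = (\<Sum>a\<in>G. \<Sum>b\<in>G. D (f a) (f b)) + (\<Sum>a\<in>G. \<Sum>b\<in>?H. D (f a) (f b))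
     + (\<Sum>a\<in>?H. \<Sum>b\<in>G. D (f a) (f b)) + (\<Sum>a\<in>?H. \<Sum>b\<in>?H. D (f a) (f b))"
      by (rule split4[OF fin GI])
    also have "(\<Sum>a\<in>?H. \<Sum>b\<in>G. D (f a) (f b)) = (\<Sum>b\<in>G. \<Sum>a\<in>?H. D (f a) (f b))" by (rule sum.swap)
    finally show ?thesis by (simp add: sum.distrib)
  qed
  have "(\<Sum>a\<in>G. ?g ?p) \<le> (\<Sum>a\<in>G. ?g (f a))" by (rule sum_mono) (use minim in blast)
  then show ?thesis unfolding L R by simp
qed

theorem mainTheorem7:
  fixes V :: "'v set" and E :: "'v set set" and w :: "'v set \<Rightarrow> nat"
    and A :: "('v \<times> 'v) set" and T :: "('v \<times> 'v) list"
  assumes "cc_mar_instance V E w A T"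
  shows "\<exists>P. strategy_profile V E A T P
           \<and> (\<forall>Q. strategy_profile V E A T Q \<longrightarrow> total_cost E w P \<le> total_cost E w Q)
           \<and> (\<forall>i < length T. \<forall>j < length T. T ! i = T ! j \<longrightarrow> P ! i = P ! j)"
proof -
  define n where "n = length T"
  let ?sp = "strategy_profile V E A T"
  have ex: "\<forall>i<n. \<exists>p. is_st_path V E A (fst (T!i)) (snd (T!i)) p"
    using assms unfolding cc_mar_instance_def n_def by blast
  define P0 where "P0 = map (\<lambda>i. SOME p. is_st_path V E A (fst (T!i)) (snd (T!i)) p) [0..<n]"
  have "?sp P0" unfolding strategy_profile_def
  proof (intro conjI allI impI)
    show "length P0 = length T" using P0_def n_def by simp
    fix i assume i: "i < length T"
    then have "\<exists>p. is_st_path V E A (fst (T!i)) (snd (T!i)) p" using ex n_def by simp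
    then show "is_st_path V E A (fst (T!i)) (snd (T!i)) (P0!i)"
      unfolding P0_def using i n_def by (simp add: someI_ex)
  qed
  then obtain P1 where P1: "?sp P1 \<and> (\<forall>Q. ?sp Q \<longrightarrow> total_cost E w P1 \<le> total_cost E w Q)"
    using ex_has_least_nat[of ?sp P0 "total_cost E w"] by blast
  define opt where "opt P \<longleftrightarrow> ?sp P \<and> (\<forall>Q. ?sp Q \<longrightarrow> total_cost E w P \<le> total_cost E w Q)" for P
  define bad where "bad P = {(i,j). i<n \<and> j<n \<and> T!i = T!j \<and> P!i \<noteq> P!j}" for P :: "'v list list"
  have "opt P1" using P1 opt_def by blast
  then obtain P where optP: "opt P" and minN: "\<forall>Q. opt Q \<longrightarrow> card (bad P) \<le> card (bad Q)"
    using ex_has_least_nat[of opt P1 "\<lambda>P. card (bad P)"] by blast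
  have spP: "?sp P" using optP opt_def by blast
  have lenP: "length P = n" using spP unfolding strategy_profile_def n_def by simp
  have pathP: "\<And>a. a < n \<Longrightarrow> is_st_path V E A (fst (T!a)) (snd (T!a)) (P!a)"
    using spP unfolding strategy_profile_def n_def by simp
  have uni: "\<forall>i<n. \<forall>j<n. T!i = T!j \<longrightarrow> P!i = P!j"
  proof (rule ccontr)
    assume "\<not> (\<forall>i<n. \<forall>j<n. T!i = T!j \<longrightarrow> P!i = P!j)"
    then obtain i j where ij: "i<n" "j<n" "T!i = T!j" "P!i \<noteq> P!j" by blast
    define G where "G = {a. a<n \<and> T!a = T!i}"
    define g where "g q = (\<Sum>k\<in>{..<n}-G. DD E w q (P!k) + DD E w (P!k) q)" for q
    have iG: "i \<in> G" using ij G_def by simp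
    obtain i0 where i0: "i0 \<in> G" "\<forall>y. y\<in>G \<longrightarrow> g (P!i0) \<le> g (P!y)"
      using ex_has_least_nat[of "\<lambda>a. a\<in>G" i "\<lambda>a. g (P!a)"] iG by blast
    have i0n: "i0 < n" "T!i0 = T!i" using i0 G_def by auto
    define Q where "Q = map (\<lambda>a. if a\<in>G then P!i0 else P!a) [0..<n]"
    have lenQ: "length Q = n" using Q_def by simp
    have Qn: "\<And>a. a<n \<Longrightarrow> Q!a = (if a\<in>G then P!i0 else P!a)" using Q_def by simp
    have spQ: "?sp Q"
      unfolding strategy_profile_def
    proof (intro conjI allI impI)
      show "length Q = length T" using lenQ n_def by simp
      fix a assume a: "a < length T"
      show "is_st_path V E A (fst (T!a)) (snd (T!a)) (Q!a)"
      proof (cases "a \<in> G")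
        case True
        then have "T!a = T!i0" using i0n G_def by simp
        then show ?thesis using True Qn a n_def pathP[OF i0n(1)] by simp
      next
        case False
        then show ?thesis using Qn a n_def pathP by simp
      qed
    qed
    have D0: "DD E w (P!i0) (P!i0) = 0"
      using pathP[OF i0n(1)] unfolding is_st_path_def is_path_def by (simp add: DD_self)
    have GI: "G \<subseteq> {..<n}" using G_def by auto
    have "total_cost E w Q = (\<Sum>a\<in>{..<n}. \<Sum>b\<in>{..<n}. DD E w (if a\<in>G then P!i0 else P!a) (if b\<in>G then P!i0 else P!b))"
      unfolding cost_decomp lenQ by (intro sum.cong refl) (simp add: Qn)
    also have "\<dots> \<le> (\<Sum>a\<in>{..<n}. \<Sum>b\<in>{..<n}. DD E w (P!a) (P!b))"
      by (rule regroup[of "{..<n}" G i0 "DD E w" "\<lambda>a. P!a", OF finite_lessThan GI i0(1) D0])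
         (use i0(2) in \<open>simp add: g_def\<close>)
    also have "\<dots> = total_cost E w P" unfolding cost_decomp lenP by simp
    finally have costQ: "total_cost E w Q \<le> total_cost E w P" .
    have optQ: "opt Q" using spQ costQ optP unfolding opt_def by (meson le_trans)
    have sub: "bad Q \<subseteq> bad P"
    proof
      fix x assume "x \<in> bad Q"
      then obtain a b where x: "x = (a,b)" "a<n" "b<n" "T!a = T!b" "Q!a \<noteq> Q!b" unfolding bad_def by blast
      have aG: "a \<notin> G"
      proof
        assume "a \<in> G"
        then have "b \<in> G" using x G_def by simp
        then show False using \<open>a \<in> G\<close> x(2,3,5) Qn by simp
      qed
      have bG: "b \<notin> G"
      proof
        assume "b \<in> G"
        then have "a \<in> G" using x G_def by simp
        then show False using \<open>b \<in> G\<close> x(2,3,5) Qn by simp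
      qed
      show "x \<in> bad P" unfolding bad_def using x Qn[OF x(2)] Qn[OF x(3)] aG bG by simp
    qed
    have "(i,j) \<in> bad P" using ij bad_def by simp
    moreover have "(i,j) \<notin> bad Q"
    proof -
      have jG: "j \<in> G" using ij G_def by simp
      show ?thesis unfolding bad_def using Qn[OF ij(1)] Qn[OF ij(2)] iG jG by simp
    qed
    ultimately have "bad Q \<subset> bad P" using sub by blast
    moreover have "finite (bad P)"
      by (rule finite_subset[of _ "{..<n} \<times> {..<n}"]) (auto simp: bad_def)
    ultimately have "card (bad Q) < card (bad P)" by (rule psubset_card_mono[rotated])
    then show False using minN optQ by (meson not_le)
  qed
  show ?thesis using optP uni unfolding opt_def n_def by blast
qed

end
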